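(* Let $G=(V,E)$ be a simple undirected graph with $V=[n]$, let $N=\binom n2$, and enumerate $\mathcal P_n=\{(i,j):1\le i<j\le n\}$ as $(i_k,j_k)$, $k\in[N]$. Let $U=[u_1,\dots,u_n]\in\mathrm{Lab}(G)$, $K=U^\top U$, and let $\tilde U\in\mathbb R^{d^2\times N}$ be the Kronecker product embedding of the node pairs, with $k$-th column $\tilde u_k=u_{i_k}\otimes u_{j_k}$. Let $C>0$ and $\mathcal H_{\tilde U}=\{w\mid w=\tilde U\beta,\ \beta\in\mathbb R^N,\ \|\beta\|_\infty\le C\}$. Then for any $p\in(0,1/2]$, $$R(\mathcal H_{\tilde U},\tilde U,p)\le C\lambda_1(K)\sqrt{2p},$$ where $\lambda_1(K)$ is the largest eigenvalue of $K$.
   Context: $\mathrm{Lab}(G)$ (orthonormal representations) is the set of matrices $U=[u_1,\dots,u_n]\in\mathbb R^{d\times n}$ (any $d$) with $\|u_i\|_2=1$ for all $i$ and $u_i^\top u_j=0$ whenever $i\ne j$ and $(i,j)\notin E$. $\otimes$ denotes the Kronecker product. Transductive Rademacher complexity: $R(\mathcal H,\tilde U,p)=\frac1N\mathbb E_\gamma\big[\sup_{h\in\mathcal H}\sum_{k=1}^N\gamma_k h^\top\tilde u_k\big]$, with $\gamma_k$ i.i.d. taking values $+1,-1,0$ with probabilities $p,p,1-2p$. *)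

theory Defs
  imports "HOL-Analysis.Analysis"
begin

definition simple_graph :: "nat \<Rightarrow> (nat \<times> nat) set \<Rightarrow> bool" where
  "simple_graph n E \<longleftrightarrow> E \<subseteq> {1..n} \<times> {1..n} \<and> sym E \<and> irrefl E"

definition Lab :: "nat \<Rightarrow> (nat \<times> nat) set \<Rightarrow> (nat \<Rightarrow> real^'d) set" where
  "Lab n E = {u. (\<forall>i\<in>{1..n}. norm (u i) = 1) \<and>
     (\<forall>i\<in>{1..n}. \<forall>j\<in>{1..n}. i \<noteq> j \<and> (i, j) \<notin> E \<longrightarrow> u i \<bullet> u j = 0)}"

definition kron :: "real^'d \<Rightarrow> real^'d \<Rightarrow> real^('d \<times> 'd)" where
  "kron x y = (\<chi> ab. x $ fst ab * y $ snd ab)"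

definition pairs :: "nat \<Rightarrow> (nat \<times> nat) set" where
  "pairs n = {(i, j). 1 \<le> i \<and> i < j \<and> j \<le> n}"

definition is_eigenvalue :: "nat \<Rightarrow> (nat \<Rightarrow> nat \<Rightarrow> real) \<Rightarrow> real \<Rightarrow> bool" where
  "is_eigenvalue n K l \<longleftrightarrow> (\<exists>x::nat \<Rightarrow> real. (\<exists>i\<in>{1..n}. x i \<noteq> 0) \<and>
      (\<forall>i\<in>{1..n}. (\<Sum>j=1..n. K i j * x j) = l * x i))"

definition largest_eigenvalue :: "nat \<Rightarrow> (nat \<Rightarrow> nat \<Rightarrow> real) \<Rightarrow> real" where
  "largest_eigenvalue n K = Max {l. is_eigenvalue n K l}"

text \<open>Transductive Rademacher complexity: columns indexed by the finite set P (N = card P),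
  gamma_k i.i.d. in {+1,-1,0} with probabilities p,p,1-2p; expectation as finite sum.\<close>
definition rademacher :: "'v::real_inner set \<Rightarrow> ('k \<Rightarrow> 'v) \<Rightarrow> 'k set \<Rightarrow> real \<Rightarrow> real" where
  "rademacher H ut P p = (1 / real (card P)) *
     (\<Sum>\<gamma> \<in> PiE P (\<lambda>_. {-1, 0, 1::real}).
        (\<Prod>k\<in>P. (if \<gamma> k = 0 then 1 - 2 * p else p)) *
        (SUP h\<in>H. \<Sum>k\<in>P. \<gamma> k * (h \<bullet> ut k)))"

end

theory Submission
  imports Defs
begin

definition QF :: "nat \<Rightarrow> (nat \<Rightarrow> real^'d) \<Rightarrow> real^'d \<Rightarrow> real" where
  "QF n u y = (\<Sum>i=1..n. (u i \<bullet> y)^2)"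
definition AO :: "nat \<Rightarrow> (nat \<Rightarrow> real^'d) \<Rightarrow> real^'d \<Rightarrow> real^'d" where
  "AO n u y = (\<Sum>i=1..n. (u i \<bullet> y) *\<^sub>R u i)"

lemma QF_scale: "QF n u (c *\<^sub>R y) = c^2 * QF n u y"
  by (simp add: QF_def sum_distrib_left power_mult_distrib algebra_simps)

lemma QF_max_exists:
  fixes u :: "nat \<Rightarrow> real^'d"
  shows "\<exists>y0. norm y0 = 1 \<and> (\<forall>y. norm y = 1 \<longrightarrow> QF n u y \<le> QF n u y0)"
proof -
  have "continuous_on (sphere 0 1) (QF n u)"
    unfolding QF_def by (intro continuous_intros)
  moreover have "compact (sphere (0::real^'d) 1)" by simp
  moreover have "sphere (0::real^'d) 1 \<noteq> {}" by simp
  ultimately obtain y0 where "y0 \<in> sphere 0 1" "\<forall>y\<in>sphere 0 1. QF n u y \<le> QF n u y0"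
    using continuous_attains_sup by blast
  then show ?thesis by auto
qed

lemma QF_bound:
  assumes "norm y0 = 1" "\<forall>y. norm y = 1 \<longrightarrow> QF n u y \<le> QF n u y0"
  shows "QF n u v \<le> QF n u y0 * (norm v)^2"
proof (cases "v = 0")
  case True then show ?thesis by (simp add: QF_def)
next
  case False
  then have "norm ((1/norm v) *\<^sub>R v) = 1" by simp
  with assms have "QF n u ((1/norm v) *\<^sub>R v) \<le> QF n u y0" by blast
  then have "(1/norm v)^2 * QF n u v \<le> QF n u y0" by (simp add: QF_scale)
  with False show ?thesis by (simp add: field_simps power2_eq_square)
qed

lemma quad_lin_zero:
  fixes L c :: real
  assumes "\<forall>t. 0 \<le> 2*t*L + t^2 * c"
  shows "L = 0"
proof (rule ccontr)
  assume L: "L \<noteq> 0"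
  define a where "a = \<bar>c\<bar> + 1"
  define t where "t = - L / a"
  have pos: "\<bar>c\<bar> + 1 > 0" by simp
  have "0 \<le> 2*t*L + t^2 * c" using assms by blast
  also have "2*t*L + t^2*c = (- 2*L^2*a + L^2 * c) / a^2"
  proof -
    have "a \<noteq> 0" using pos a_def by simp
    then show ?thesis by (simp add: t_def field_simps power2_eq_square)
  qed
  also have "\<dots> < 0"
  proof -
    have h2: "L^2 > 0" using L by simp
    then have h1: "L^2 * c \<le> L^2 * \<bar>c\<bar>" by (simp add: mult_left_mono)
    have h3: "L^2 * \<bar>c\<bar> \<ge> 0" by simp
    have "- 2*L^2*a + L^2*c = -2*L^2 - 2*(L^2*\<bar>c\<bar>) + L^2*c" by (simp add: a_def algebra_simps)
    then have "- 2*L^2*a + L^2 * c < 0" using h1 h2 h3 by linarith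
    moreover have "a^2 > 0" using a_def pos by simp
    ultimately show ?thesis by (simp add: divide_neg_pos)
  qed
  finally show False by simp
qed

lemma inner_AO: "z \<bullet> AO n u y = (\<Sum>i=1..n. (u i \<bullet> y) * (u i \<bullet> z))"
  by (simp add: AO_def inner_sum_right inner_commute)

lemma eigen_AO:
  assumes y0: "norm y0 = 1" and mx: "\<forall>y. norm y = 1 \<longrightarrow> QF n u y \<le> QF n u y0"
  shows "AO n u y0 = QF n u y0 *\<^sub>R y0"
proof -
  define \<mu> where "\<mu> = QF n u y0"
  define z where "z = \<mu> *\<^sub>R y0 - AO n u y0"
  have bnd: "\<And>v. QF n u v \<le> \<mu> * (norm v)^2" using QF_bound[OF y0 mx] \<mu>_def by blast
  have "\<forall>t. 0 \<le> 2*t*(z \<bullet> z) + t^2 * (\<mu> * (norm z)^2 - QF n u z)"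
  proof
    fix t :: real
    have n2: "(y0 + t *\<^sub>R z) \<bullet> (y0 + t *\<^sub>R z) = 1 + 2*t*(y0 \<bullet> z) + t^2 * (z \<bullet> z)"
    proof -
      have "y0 \<bullet> y0 = 1" using y0 by (simp add: power2_norm_eq_inner[symmetric])
      then show ?thesis by (simp add: inner_add_left inner_add_right
          inner_commute power2_eq_square algebra_simps)
    qed
    have q2: "QF n u (y0 + t *\<^sub>R z) = \<mu> + 2*t*(\<Sum>i=1..n. (u i \<bullet> y0) * (u i \<bullet> z)) + t^2 * QF n u z"
      by (simp add: QF_def \<mu>_def inner_add_right power2_eq_square algebra_simps
          sum.distrib sum_distrib_left)
    have zz: "z \<bullet> z = \<mu> * (y0 \<bullet> z) - (\<Sum>i=1..n. (u i \<bullet> y0) * (u i \<bullet> z))"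
    proof -
      have "z \<bullet> z = z \<bullet> (\<mu> *\<^sub>R y0) - z \<bullet> AO n u y0" by (simp add: z_def inner_diff_right)
      then show ?thesis by (simp add: inner_AO inner_commute)
    qed
    have "0 \<le> \<mu> * (norm (y0 + t *\<^sub>R z))^2 - QF n u (y0 + t *\<^sub>R z)" using bnd[of "y0 + t *\<^sub>R z"] by (simp add: power2_norm_eq_inner)
    also have "\<dots> = 2*t*(z \<bullet> z) + t^2 * (\<mu> * (norm z)^2 - QF n u z)"
      unfolding power2_norm_eq_inner n2 q2 zz by (simp add: algebra_simps)
    finally show "0 \<le> 2*t*(z \<bullet> z) + t^2 * (\<mu> * (norm z)^2 - QF n u z)" .
  qed
  then have "z \<bullet> z = 0" by (rule quad_lin_zero)
  then have "z = 0" by simp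
  then show ?thesis by (simp add: z_def \<mu>_def)
qed

lemma mu_ge1:
  assumes "n \<ge> 1" "norm (u 1) = 1"
    and y0: "norm y0 = 1" and mx: "\<forall>y. norm y = 1 \<longrightarrow> QF n u y \<le> QF n u y0"
  shows "QF n u y0 \<ge> 1"
proof -
  have "(u 1 \<bullet> u 1)^2 \<le> QF n u (u 1)"
    unfolding QF_def using assms(1)
    by (intro member_le_sum) auto
  moreover have "u 1 \<bullet> u 1 = 1" using assms(2) by (simp add: power2_norm_eq_inner[symmetric])
  ultimately show ?thesis using mx assms(2) by force
qed

lemma mu_eig:
  assumes "n \<ge> 1" "norm (u 1) = 1"
    and y0: "norm y0 = 1" and mx: "\<forall>y. norm y = 1 \<longrightarrow> QF n u y \<le> QF n u y0"
  shows "is_eigenvalue n (\<lambda>i j. u i \<bullet> u j) (QF n u y0)"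
proof -
  define x where "x i = u i \<bullet> y0" for i
  have ge: "QF n u y0 \<ge> 1" using mu_ge1[OF assms] .
  have nz: "\<exists>i\<in>{1..n}. x i \<noteq> 0"
  proof (rule ccontr)
    assume "\<not> ?thesis"
    then have "QF n u y0 = 0" by (simp add: QF_def x_def)
    with ge show False by simp
  qed
  have ev: "AO n u y0 = QF n u y0 *\<^sub>R y0" by (rule eigen_AO[OF y0 mx])
  have "(\<Sum>j=1..n. (u i \<bullet> u j) * x j) = QF n u y0 * x i" for i
  proof -
    have "(\<Sum>j=1..n. (u i \<bullet> u j) * x j) = u i \<bullet> AO n u y0"
      by (simp add: AO_def inner_sum_right x_def mult.commute)
    also have "\<dots> = QF n u y0 * x i" by (simp add: ev x_def)
    finally show ?thesis .
  qed
  with nz show ?thesis unfolding is_eigenvalue_def by blast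
qed

lemma AO_sym: "AO n u y \<bullet> z = y \<bullet> AO n u z"
proof -
  have "AO n u y \<bullet> z = z \<bullet> AO n u y" by (rule inner_commute)
  then show ?thesis by (simp add: inner_AO mult.commute)
qed

lemma eig_K_to_AO:
  assumes "is_eigenvalue n (\<lambda>i j. u i \<bullet> u j) l" "l \<noteq> 0"
  shows "\<exists>y. y \<noteq> 0 \<and> AO n u y = l *\<^sub>R y"
proof -
  obtain x where nz: "\<exists>i\<in>{1..n}. x i \<noteq> 0"
    and eq: "\<forall>i\<in>{1..n}. (\<Sum>j=1..n. (u i \<bullet> u j) * x j) = l * x i"
    using assms(1) unfolding is_eigenvalue_def by blast
  define y where "y = (\<Sum>j=1..n. x j *\<^sub>R u j)"
  have uy: "u i \<bullet> y = l * x i" if "i \<in> {1..n}" for i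
    using eq that by (simp add: y_def inner_sum_right mult.commute)
  have "y \<noteq> 0"
  proof
    assume "y = 0"
    then have "l * x i = 0" if "i \<in> {1..n}" for i using uy[OF that] by simp
    with assms(2) nz show False by auto
  qed
  moreover have "AO n u y = l *\<^sub>R y"
    unfolding AO_def y_def scaleR_sum_right
    by (rule sum.cong) (use uy[unfolded y_def] in auto)
  ultimately show ?thesis by blast
qed

lemma finite_AO_eig: "finite {l. \<exists>y. y \<noteq> 0 \<and> AO n u y = l *\<^sub>R y}"
proof -
  define L where "L = {l. \<exists>y. y \<noteq> 0 \<and> AO n u y = l *\<^sub>R y}"
  define f where "f l = (SOME y. y \<noteq> 0 \<and> AO n u y = l *\<^sub>R y)" for l
  have f: "f l \<noteq> 0 \<and> AO n u (f l) = l *\<^sub>R f l" if "l \<in> L" for l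
  proof -
    have "\<exists>y. y \<noteq> 0 \<and> AO n u y = l *\<^sub>R y" using that by (simp add: L_def)
    then show ?thesis unfolding f_def by (rule someI_ex)
  qed
  have inj: "inj_on f L"
  proof
    fix a b assume ab: "a \<in> L" "b \<in> L" "f a = f b"
    then have "a *\<^sub>R f a = b *\<^sub>R f a" using f by metis
    then show "a = b" using f[OF ab(1)] by simp
  qed
  have orth: "pairwise orthogonal (f ` L)"
    unfolding pairwise_def
  proof (intro ballI impI)
    fix y1 y2 assume "y1 \<in> f ` L" "y2 \<in> f ` L" "y1 \<noteq> y2"
    then obtain a b where a: "a \<in> L" "y1 = f a" and b: "b \<in> L" "y2 = f b" by blast
    with \<open>y1 \<noteq> y2\<close> have "a \<noteq> b" by blast
    have "a * (y1 \<bullet> y2) = AO n u y1 \<bullet> y2" using f[OF a(1)] a(2) by simp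
    also have "\<dots> = y1 \<bullet> AO n u y2" by (rule AO_sym)
    also have "\<dots> = b * (y1 \<bullet> y2)" using f[OF b(1)] b(2) by simp
    finally have "(a - b) * (y1 \<bullet> y2) = 0" by (simp add: algebra_simps)
    with \<open>a \<noteq> b\<close> show "orthogonal y1 y2" by (simp add: orthogonal_def)
  qed
  have "0 \<notin> f ` L" using f by auto
  with orth have "independent (f ` L)" by (rule pairwise_orthogonal_independent)
  then have "finite (f ` L)" by (rule finiteI_independent)
  then have "finite L" using inj by (simp add: finite_image_iff)
  then show ?thesis by (simp add: L_def)
qed

lemma finite_K_eig: fixes u :: "nat \<Rightarrow> real^'d" shows "finite {l. is_eigenvalue n (\<lambda>i j. u i \<bullet> u j) l}"
proof (rule finite_subset[OF _ finite_insert[THEN iffD2, OF finite_AO_eig[of n u]]])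
  show "{l. is_eigenvalue n (\<lambda>i j. u i \<bullet> u j) l} \<subseteq> insert 0 {l. \<exists>y. y \<noteq> 0 \<and> AO n u y = l *\<^sub>R y}"
    using eig_K_to_AO by blast
qed

lemma norm2_vec: "(norm (x::real^'n))^2 = (\<Sum>t\<in>UNIV. (x$t)^2)"
  unfolding power2_norm_eq_inner inner_vec_def by (simp add: power2_eq_square)

lemma KL:
  fixes u :: "nat \<Rightarrow> real^'d"
  assumes bnd: "\<And>v. QF n u v \<le> \<mu> * (norm v)^2" and mu: "\<mu> \<ge> 0"
  shows "(norm (\<Sum>i=1..n. x i *\<^sub>R u i))^2 \<le> \<mu> * (\<Sum>i=1..n. (x i)^2)"
proof -
  define v where "v = (\<Sum>i=1..n. x i *\<^sub>R u i)"
  have vv: "v \<bullet> v = (\<Sum>i=1..n. x i * (u i \<bullet> v))"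
    by (simp add: v_def inner_sum_left)
  have "(v \<bullet> v)^2 \<le> (\<Sum>i=1..n. (x i)^2) * (\<Sum>i=1..n. (u i \<bullet> v)^2)"
    unfolding vv by (rule Cauchy_Schwarz_ineq_sum)
  also have "\<dots> \<le> (\<Sum>i=1..n. (x i)^2) * (\<mu> * (v \<bullet> v))"
    using bnd[of v] by (intro mult_left_mono) (auto simp: QF_def power2_norm_eq_inner intro: sum_nonneg)
  finally have *: "(v \<bullet> v) * (v \<bullet> v) \<le> (\<mu> * (\<Sum>i=1..n. (x i)^2)) * (v \<bullet> v)"
    by (simp add: power2_eq_square algebra_simps)
  show ?thesis
  proof (cases "v \<bullet> v = 0")
    case True
    have "(norm v)^2 \<le> \<mu> * (\<Sum>i=1..n. (x i)^2)"
      using mu True by (simp add: power2_norm_eq_inner sum_nonneg)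
    then show ?thesis by (simp add: v_def)
  next
    case False
    then have "v \<bullet> v > 0" by (simp add: order_less_le)
    with * have "v \<bullet> v \<le> \<mu> * (\<Sum>i=1..n. (x i)^2)" by simp
    then have "(norm v)^2 \<le> \<mu> * (\<Sum>i=1..n. (x i)^2)" by (simp add: power2_norm_eq_inner)
    then show ?thesis by (simp add: v_def)
  qed
qed

lemma kron_bound:
  fixes u :: "nat \<Rightarrow> real^'d"
  assumes bnd: "\<And>v. QF n u v \<le> \<mu> * (norm v)^2" and mu: "\<mu> \<ge> 0"
  shows "(norm (\<Sum>i=1..n. \<Sum>j=1..n. B i j *\<^sub>R kron (u i) (u j)))^2
         \<le> \<mu>^2 * (\<Sum>i=1..n. \<Sum>j=1..n. (B i j)^2)"
proof -
  define v where "v = (\<Sum>i=1..n. \<Sum>j=1..n. B i j *\<^sub>R kron (u i) (u j))"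
  define c where "c s j = (\<Sum>i=1..n. B i j * u i $ s)" for s j
  define w where "w s = (\<Sum>j=1..n. c s j *\<^sub>R u j)" for s
  have vst: "v $ (s,t) = w s $ t" for s t
  proof -
    have "w s $ t = (\<Sum>j=1..n. \<Sum>i=1..n. B i j * (u i $ s * u j $ t))"
      by (simp add: w_def c_def sum_component sum_distrib_right sum_distrib_left mult.commute mult.left_commute)
    also have "\<dots> = (\<Sum>i=1..n. \<Sum>j=1..n. B i j * (u i $ s * u j $ t))"
      by (rule sum.swap)
    also have "\<dots> = v $ (s,t)" by (simp add: v_def kron_def)
    finally show ?thesis by simp
  qed
  have "(norm v)^2 = (\<Sum>st\<in>UNIV. (v $ st)^2)" by (rule norm2_vec)
  also have "\<dots> = (\<Sum>s\<in>UNIV. \<Sum>t\<in>UNIV. (v $ (s,t))^2)"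
    by (simp add: UNIV_Times_UNIV[symmetric] sum.cartesian_product del: UNIV_Times_UNIV)
  also have "\<dots> = (\<Sum>s\<in>UNIV. (norm (w s))^2)" by (simp add: vst norm2_vec)
  also have "\<dots> \<le> (\<Sum>s\<in>UNIV. \<mu> * (\<Sum>j=1..n. (c s j)^2))"
    unfolding w_def by (intro sum_mono KL[OF bnd mu])
  also have "\<dots> = \<mu> * (\<Sum>j=1..n. \<Sum>s\<in>UNIV. (c s j)^2)"
    by (simp add: sum_distrib_left sum.swap[of _ UNIV])
  also have "\<dots> = \<mu> * (\<Sum>j=1..n. (norm (\<Sum>i=1..n. B i j *\<^sub>R u i))^2)"
    by (simp add: norm2_vec c_def sum_component mult.commute)
  also have "\<dots> \<le> \<mu> * (\<Sum>j=1..n. \<mu> * (\<Sum>i=1..n. (B i j)^2))"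
    by (intro mult_left_mono sum_mono KL[OF bnd mu] mu)
  also have "\<dots> = \<mu>^2 * (\<Sum>i=1..n. \<Sum>j=1..n. (B i j)^2)"
    by (simp add: sum_distrib_left power2_eq_square mult.assoc) (rule sum.swap)
  finally show ?thesis by (simp add: v_def)
qed

definition qw :: "real \<Rightarrow> real \<Rightarrow> real" where
  "qw p x = (if x = 0 then 1 - 2 * p else p)"

lemma sum3: "(\<Sum>x\<in>{-1,0,1::real}. f x) = f (-1) + f 0 + f 1"
  by (simp add: add.assoc)

lemma mom0:
  assumes "finite P"
  shows "(\<Sum>\<gamma>\<in>PiE P (\<lambda>_. {-1,0,1::real}). \<Prod>m\<in>P. qw p (\<gamma> m)) = 1"
proof -
  have "(\<Sum>\<gamma>\<in>PiE P (\<lambda>_. {-1,0,1::real}). \<Prod>m\<in>P. qw p (\<gamma> m))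
      = (\<Prod>m\<in>P. \<Sum>x\<in>{-1,0,1::real}. qw p x)"
    by (rule prod_sum_PiE[symmetric]) (use assms in auto)
  also have "\<dots> = 1" by (simp add: sum3 qw_def)
  finally show ?thesis .
qed

lemma mom2:
  assumes "finite P" "k \<in> P" "l \<in> P"
  shows "(\<Sum>\<gamma>\<in>PiE P (\<lambda>_. {-1,0,1::real}). (\<Prod>m\<in>P. qw p (\<gamma> m)) * (\<gamma> k * \<gamma> l))
       = (if k = l then 2 * p else 0)"
proof -
  define f where "f m x = qw p x * ((if m = k then x else 1) * (if m = l then x else 1))" for m x
  have "(\<Prod>m\<in>P. f m (\<gamma> m)) = (\<Prod>m\<in>P. qw p (\<gamma> m)) * (\<gamma> k * \<gamma> l)" for \<gamma>
    using assms by (simp add: f_def prod.distrib prod.delta)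
  then have "(\<Sum>\<gamma>\<in>PiE P (\<lambda>_. {-1,0,1::real}). (\<Prod>m\<in>P. qw p (\<gamma> m)) * (\<gamma> k * \<gamma> l))
      = (\<Sum>\<gamma>\<in>PiE P (\<lambda>_. {-1,0,1::real}). \<Prod>m\<in>P. f m (\<gamma> m))" by simp
  also have "\<dots> = (\<Prod>m\<in>P. \<Sum>x\<in>{-1,0,1::real}. f m x)"
    by (rule prod_sum_PiE[symmetric]) (use assms in auto)
  also have "\<dots> = (if k = l then 2 * p else 0)"
  proof (cases "k = l")
    case True
    have "(\<Sum>x\<in>{-1,0,1::real}. f m x) = (if m = k then 2 * p else 1)" for m
      using True by (simp add: sum3 f_def qw_def)
    then show ?thesis using True assms by (simp add: prod.delta)
  next
    case False
    have "(\<Sum>x\<in>{-1,0,1::real}. f k x) = 0"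
      using False by (simp add: sum3 f_def qw_def)
    then show ?thesis using False assms by (auto intro: prod_zero)
  qed
  finally show ?thesis .
qed

lemma kron_inner: "kron a b \<bullet> kron c e = (a \<bullet> c) * (b \<bullet> e)"
proof -
  have "kron a b \<bullet> kron c e = (\<Sum>st\<in>UNIV. (a $ fst st * b $ snd st) * (c $ fst st * e $ snd st))"
    by (simp add: inner_vec_def kron_def)
  also have "\<dots> = (\<Sum>s\<in>UNIV. \<Sum>t\<in>UNIV. (a $ s * c $ s) * (b $ t * e $ t))"
    by (simp add: UNIV_Times_UNIV[symmetric] sum.cartesian_product del: UNIV_Times_UNIV)
       (simp add: algebra_simps case_prod_beta)
  also have "\<dots> = (a \<bullet> c) * (b \<bullet> e)"
    by (simp add: inner_vec_def sum_product)
  finally show ?thesis .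
qed

lemma finite_pairs: "finite (pairs n)"
proof (rule finite_subset)
  show "pairs n \<subseteq> {1..n} \<times> {1..n}" by (auto simp: pairs_def)
qed simp

lemma pairs_sub: "k \<in> pairs n \<Longrightarrow> fst k \<in> {1..n} \<and> snd k \<in> {1..n}"
  by (auto simp: pairs_def)

lemma h_repr:
  "(\<Sum>k\<in>pairs n. \<beta> k *\<^sub>R kron (u (fst k)) (u (snd k)))
   = (\<Sum>i=1..n. \<Sum>j=1..n. (if (i,j) \<in> pairs n then \<beta> (i,j) else 0) *\<^sub>R kron (u i) (u j))"
proof -
  have "(\<Sum>i=1..n. \<Sum>j=1..n. (if (i,j) \<in> pairs n then \<beta> (i,j) else 0) *\<^sub>R kron (u i) (u j))
     = (\<Sum>k\<in>{1..n}\<times>{1..n}. if k \<in> pairs n then \<beta> k *\<^sub>R kron (u (fst k)) (u (snd k)) else 0)"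
    unfolding sum.cartesian_product by (intro sum.cong refl) (auto split: prod.splits)
  also have "\<dots> = (\<Sum>k\<in>({1..n}\<times>{1..n}) \<inter> pairs n. \<beta> k *\<^sub>R kron (u (fst k)) (u (snd k)))"
    by (rule sum.inter_restrict[symmetric]) simp
  also have "({1..n}\<times>{1..n}) \<inter> pairs n = pairs n" by (auto simp: pairs_def)
  finally show ?thesis by simp
qed

lemma B_sq: fixes \<beta> :: "nat \<times> nat \<Rightarrow> real" shows
  "(\<Sum>i=1..n. \<Sum>j=1..n. (if (i,j) \<in> pairs n then \<beta> (i,j) else 0)^2)
   = (\<Sum>k\<in>pairs n. (\<beta> k)^2)"
proof -
  have "(\<Sum>i=1..n. \<Sum>j=1..n. (if (i,j) \<in> pairs n then \<beta> (i,j) else 0)^2)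
     = (\<Sum>k\<in>{1..n}\<times>{1..n}. if k \<in> pairs n then (\<beta> k)^2 else 0)"
    unfolding sum.cartesian_product by (intro sum.cong refl) (auto split: prod.splits simp: power2_eq_square)
  also have "\<dots> = (\<Sum>k\<in>({1..n}\<times>{1..n}) \<inter> pairs n. (\<beta> k)^2)"
    by (rule sum.inter_restrict[symmetric]) simp
  also have "({1..n}\<times>{1..n}) \<inter> pairs n = pairs n" by (auto simp: pairs_def)
  finally show ?thesis by simp
qed

lemma sup_bound:
  fixes u :: "nat \<Rightarrow> real^'d" and \<gamma> :: "nat \<times> nat \<Rightarrow> real"
  assumes bnd: "\<And>v. QF n u v \<le> \<mu> * (norm v)^2" and mu: "\<mu> \<ge> 0" and C: "C > 0"
  shows "(SUP h\<in>{w. \<exists>\<beta>::nat \<times> nat \<Rightarrow> real. (\<forall>k\<in>pairs n. \<bar>\<beta> k\<bar> \<le> C) \<and>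
                 w = (\<Sum>k\<in>pairs n. \<beta> k *\<^sub>R kron (u (fst k)) (u (snd k)))}.
            \<Sum>k\<in>pairs n. \<gamma> k * (h \<bullet> kron (u (fst k)) (u (snd k))))
         \<le> C * \<mu> * sqrt (real (card (pairs n))) * norm (\<Sum>k\<in>pairs n. \<gamma> k *\<^sub>R kron (u (fst k)) (u (snd k)))"
proof (rule cSUP_least)
  let ?N = "real (card (pairs n))"
  let ?g = "\<Sum>k\<in>pairs n. \<gamma> k *\<^sub>R kron (u (fst k)) (u (snd k))"
  show "{w. \<exists>\<beta>::nat \<times> nat \<Rightarrow> real. (\<forall>k\<in>pairs n. \<bar>\<beta> k\<bar> \<le> C) \<and>
                 w = (\<Sum>k\<in>pairs n. \<beta> k *\<^sub>R kron (u (fst k)) (u (snd k)))} \<noteq> {}"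
    apply (rule ex_in_conv[THEN iffD1])
    apply (rule exI[of _ 0])
    apply (simp only: mem_Collect_eq)
    apply (rule exI[of _ "\<lambda>_. 0"])
    using C by simp
  fix h assume "h \<in> {w. \<exists>\<beta>::nat \<times> nat \<Rightarrow> real. (\<forall>k\<in>pairs n. \<bar>\<beta> k\<bar> \<le> C) \<and>
                 w = (\<Sum>k\<in>pairs n. \<beta> k *\<^sub>R kron (u (fst k)) (u (snd k)))}"
  then obtain \<beta> :: "nat \<times> nat \<Rightarrow> real" where b: "\<forall>k\<in>pairs n. \<bar>\<beta> k\<bar> \<le> C"
    and h: "h = (\<Sum>k\<in>pairs n. \<beta> k *\<^sub>R kron (u (fst k)) (u (snd k)))" by blast
  have "(norm h)^2 \<le> \<mu>^2 * (\<Sum>i=1..n. \<Sum>j=1..n. (if (i,j) \<in> pairs n then \<beta> (i,j) else 0)^2)"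
    unfolding h h_repr by (rule kron_bound[OF bnd mu])
  also have "\<dots> = \<mu>^2 * (\<Sum>k\<in>pairs n. (\<beta> k)^2)" by (simp only: B_sq)
  also have "\<dots> \<le> \<mu>^2 * (?N * C^2)"
  proof (intro mult_left_mono sum_bounded_above)
    fix k assume "k \<in> pairs n"
    then have "\<bar>\<beta> k\<bar> \<le> C" using b by blast
    then show "(\<beta> k)^2 \<le> C^2" by (metis abs_ge_zero power2_abs power_mono)
  qed simp
  finally have "norm h \<le> sqrt (\<mu>^2 * (?N * C^2))" by (rule real_le_rsqrt)
  also have "\<dots> = \<mu> * C * sqrt ?N"
    using mu C by (simp add: real_sqrt_mult)
  finally have nh: "norm h \<le> \<mu> * C * sqrt ?N" .
  have "(\<Sum>k\<in>pairs n. \<gamma> k * (h \<bullet> kron (u (fst k)) (u (snd k)))) = h \<bullet> ?g"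
    by (simp add: inner_sum_right)
  also have "\<dots> \<le> norm h * norm ?g" by (rule norm_cauchy_schwarz)
  also have "\<dots> \<le> (\<mu> * C * sqrt ?N) * norm ?g" by (rule mult_right_mono[OF nh norm_ge_zero])
  finally show "(\<Sum>k\<in>pairs n. \<gamma> k * (h \<bullet> kron (u (fst k)) (u (snd k)))) \<le> C * \<mu> * sqrt ?N * norm ?g"
    by (simp add: mult_ac)
qed

lemma exp_sq:
  fixes ut :: "'k \<Rightarrow> 'v::real_inner"
  assumes P: "finite P" and unit: "\<forall>k\<in>P. ut k \<bullet> ut k = 1"
  shows "(\<Sum>\<gamma>\<in>PiE P (\<lambda>_. {-1,0,1::real}). (\<Prod>m\<in>P. qw p (\<gamma> m)) * (norm (\<Sum>k\<in>P. \<gamma> k *\<^sub>R ut k))^2)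
     = 2 * p * real (card P)"
proof -
  let ?W = "PiE P (\<lambda>_. {-1,0,1::real})"
  let ?w = "\<lambda>\<gamma>. \<Prod>m\<in>P. qw p (\<gamma> m)"
  have "(\<Sum>\<gamma>\<in>?W. ?w \<gamma> * (norm (\<Sum>k\<in>P. \<gamma> k *\<^sub>R ut k))^2)
      = (\<Sum>\<gamma>\<in>?W. \<Sum>k\<in>P. \<Sum>l\<in>P. (ut k \<bullet> ut l) * (?w \<gamma> * (\<gamma> k * \<gamma> l)))"
    by (simp add: power2_norm_eq_inner inner_sum_left inner_sum_right sum_distrib_left mult_ac inner_commute)
  also have "\<dots> = (\<Sum>k\<in>P. \<Sum>l\<in>P. (ut k \<bullet> ut l) * (\<Sum>\<gamma>\<in>?W. ?w \<gamma> * (\<gamma> k * \<gamma> l)))"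
    by (simp add: sum_distrib_left sum.swap[of _ ?W])
  also have "\<dots> = (\<Sum>k\<in>P. \<Sum>l\<in>P. (ut k \<bullet> ut l) * (if k = l then 2 * p else 0))"
    by (intro sum.cong refl) (simp add: mom2[OF P])
  also have "\<dots> = (\<Sum>k\<in>P. 2 * p)"
    using unit P by (simp add: if_distrib sum.delta sum.delta' cong: if_cong)
  finally show ?thesis by simp
qed

lemma exp_norm:
  fixes ut :: "'k \<Rightarrow> 'v::real_inner"
  assumes P: "finite P" and unit: "\<forall>k\<in>P. ut k \<bullet> ut k = 1"
    and Npos: "card P > 0" and p: "0 < p" "p \<le> 1/2"
  shows "(\<Sum>\<gamma>\<in>PiE P (\<lambda>_. {-1,0,1::real}). (\<Prod>m\<in>P. qw p (\<gamma> m)) * norm (\<Sum>k\<in>P. \<gamma> k *\<^sub>R ut k))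
     \<le> sqrt (2 * p * real (card P))"
proof -
  let ?W = "PiE P (\<lambda>_. {-1,0,1::real})"
  let ?w = "\<lambda>\<gamma>. \<Prod>m\<in>P. qw p (\<gamma> m)"
  let ?g = "\<lambda>\<gamma>. norm (\<Sum>k\<in>P. \<gamma> k *\<^sub>R ut k)"
  define a where "a = sqrt (2 * p * real (card P))"
  have apos: "a > 0" using p Npos by (simp add: a_def)
  have a2: "a^2 = 2 * p * real (card P)" using p by (simp add: a_def)
  have wnn: "?w \<gamma> \<ge> 0" for \<gamma> using p by (intro prod_nonneg) (simp add: qw_def)
  have amgm: "x \<le> (x^2 + a^2) / (2*a)" for x :: real
  proof -
    have "0 \<le> (x - a)^2" by simp
    then have "2*a*x \<le> x^2 + a^2" by (simp add: power2_eq_square algebra_simps)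
    then show ?thesis using apos by (simp add: field_simps)
  qed
  have "(\<Sum>\<gamma>\<in>?W. ?w \<gamma> * ?g \<gamma>) \<le> (\<Sum>\<gamma>\<in>?W. ?w \<gamma> * (((?g \<gamma>)^2 + a^2) / (2*a)))"
    by (intro sum_mono mult_left_mono wnn amgm)
  also have "\<dots> = (\<Sum>\<gamma>\<in>?W. (?w \<gamma> * (?g \<gamma>)^2 + a^2 * ?w \<gamma>)) / (2*a)"
    by (simp add: sum_divide_distrib algebra_simps)
  also have "\<dots> = ((\<Sum>\<gamma>\<in>?W. ?w \<gamma> * (?g \<gamma>)^2) + a^2 * (\<Sum>\<gamma>\<in>?W. ?w \<gamma>)) / (2*a)"
    by (simp only: sum.distrib sum_distrib_left)
  also have "\<dots> = (a^2 + a^2) / (2*a)"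
    by (simp add: exp_sq[OF P unit] mom0[OF P] a2)
  also have "\<dots> = a" using apos by (simp add: power2_eq_square)
  finally show ?thesis by (simp add: a_def)
qed

theorem lemma1:
  fixes n :: nat and E :: "(nat \<times> nat) set" and u :: "nat \<Rightarrow> real^'d"
    and C p :: real
  assumes "n \<ge> 1"
    and "simple_graph n E"
    and "u \<in> Lab n E"
    and "C > 0"
    and "0 < p" and "p \<le> 1/2"
  shows "rademacher
           {w. \<exists>\<beta>::nat \<times> nat \<Rightarrow> real. (\<forall>k\<in>pairs n. \<bar>\<beta> k\<bar> \<le> C) \<and>
                 w = (\<Sum>k\<in>pairs n. \<beta> k *\<^sub>R kron (u (fst k)) (u (snd k)))}
           (\<lambda>k. kron (u (fst k)) (u (snd k))) (pairs n) p
         \<le> C * largest_eigenvalue n (\<lambda>i j. u i \<bullet> u j) * sqrt (2 * p)"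
proof -
  let ?H = "{w. \<exists>\<beta>::nat \<times> nat \<Rightarrow> real. (\<forall>k\<in>pairs n. \<bar>\<beta> k\<bar> \<le> C) \<and>
                 w = (\<Sum>k\<in>pairs n. \<beta> k *\<^sub>R kron (u (fst k)) (u (snd k)))}"
  let ?ut = "\<lambda>k. kron (u (fst k)) (u (snd k))"
  let ?P = "pairs n"
  let ?N = "real (card ?P)"
  let ?W = "PiE ?P (\<lambda>_. {-1,0,1::real})"
  let ?w = "\<lambda>\<gamma>. \<Prod>m\<in>?P. qw p (\<gamma> m)"
  let ?S = "\<lambda>\<gamma>. SUP h\<in>?H. \<Sum>k\<in>?P. \<gamma> k * (h \<bullet> ?ut k)"
  have unorm: "norm (u i) = 1" if "i \<in> {1..n}" for i
    using assms(3) that by (simp add: Lab_def)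
  have u1: "norm (u 1) = 1" using unorm assms(1) by simp
  obtain y0 :: "real^'d" where y0: "norm y0 = 1" and mx: "\<forall>y. norm y = 1 \<longrightarrow> QF n u y \<le> QF n u y0"
    using QF_max_exists by blast
  define \<mu> where "\<mu> = QF n u y0"
  have mu1: "\<mu> \<ge> 1" unfolding \<mu>_def by (rule mu_ge1[OF assms(1) u1 y0 mx])
  have bnd: "\<And>v. QF n u v \<le> \<mu> * (norm v)^2" unfolding \<mu>_def by (rule QF_bound[OF y0 mx])
  have eig: "is_eigenvalue n (\<lambda>i j. u i \<bullet> u j) \<mu>" unfolding \<mu>_def by (rule mu_eig[OF assms(1) u1 y0 mx])
  have lam: "\<mu> \<le> largest_eigenvalue n (\<lambda>i j. u i \<bullet> u j)"
    unfolding largest_eigenvalue_def by (rule Max_ge) (use finite_K_eig eig in auto)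
  have rhs: "C * \<mu> * sqrt (2 * p) \<le> C * largest_eigenvalue n (\<lambda>i j. u i \<bullet> u j) * sqrt (2 * p)"
    using lam assms(4,5) by (intro mult_right_mono mult_left_mono) auto
  have rhs0: "0 \<le> C * \<mu> * sqrt (2 * p)" using mu1 assms(4,5) by simp
  have wnn: "?w \<gamma> \<ge> 0" for \<gamma> using assms(5,6) by (intro prod_nonneg) (simp add: qw_def)
  have wdef: "(\<Prod>k\<in>?P. (if \<gamma> k = 0 then 1 - 2 * p else p)) = ?w \<gamma>" for \<gamma>
    by (simp add: qw_def)
  have R: "rademacher ?H ?ut ?P p = (1 / ?N) * (\<Sum>\<gamma>\<in>?W. ?w \<gamma> * ?S \<gamma>)"
    unfolding rademacher_def wdef ..
  show ?thesis
  proof (cases "card ?P = 0")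
    case True
    then show ?thesis using R rhs rhs0 by simp
  next
    case False
    then have Npos: "card ?P > 0" by simp
    have unit: "\<forall>k\<in>?P. ?ut k \<bullet> ?ut k = 1"
    proof
      fix k assume "k \<in> ?P"
      then have "fst k \<in> {1..n}" "snd k \<in> {1..n}" using pairs_sub by auto
      then have "u (fst k) \<bullet> u (fst k) = 1" "u (snd k) \<bullet> u (snd k) = 1"
        using unorm by (simp_all add: power2_norm_eq_inner[symmetric])
      then show "?ut k \<bullet> ?ut k = 1"
        by (simp only: kron_inner mult_1_left)
    qed
    have "(\<Sum>\<gamma>\<in>?W. ?w \<gamma> * ?S \<gamma>)
        \<le> (\<Sum>\<gamma>\<in>?W. ?w \<gamma> * (C * \<mu> * sqrt ?N * norm (\<Sum>k\<in>?P. \<gamma> k *\<^sub>R ?ut k)))"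
      using mu1 assms(4)
      by (intro sum_mono mult_left_mono wnn sup_bound[OF bnd]) auto
    also have "\<dots> = (C * \<mu> * sqrt ?N) * (\<Sum>\<gamma>\<in>?W. ?w \<gamma> * norm (\<Sum>k\<in>?P. \<gamma> k *\<^sub>R ?ut k))"
      by (simp add: sum_distrib_left mult_ac)
    also have "\<dots> \<le> (C * \<mu> * sqrt ?N) * sqrt (2 * p * ?N)"
      using mu1 assms(4)
      by (intro mult_left_mono exp_norm[OF finite_pairs unit Npos assms(5,6)]) auto
    finally have *: "(\<Sum>\<gamma>\<in>?W. ?w \<gamma> * ?S \<gamma>) \<le> (C * \<mu> * sqrt ?N) * sqrt (2 * p * ?N)" .
    have "rademacher ?H ?ut ?P p \<le> (1 / ?N) * ((C * \<mu> * sqrt ?N) * sqrt (2 * p * ?N))"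
      unfolding R using * Npos by (intro mult_left_mono) auto
    also have "\<dots> = C * \<mu> * sqrt (2 * p)"
    proof -
      have "sqrt ?N * sqrt (2 * p * ?N) = ?N * sqrt (2 * p)"
        using Npos by (simp add: real_sqrt_mult mult_ac)
      then show ?thesis using Npos by (simp add: field_simps)
    qed
    finally show ?thesis using rhs by linarith
  qed
qed

end
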